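(* Let $G$ be an $(N,k)$ Adinkra with associated doubly even code $C$. For a closed walk in $G$, let $w\in\mathbb{Z}_2^N$ be the vector with $w_i=1$ exactly for those colors $i$ traversed an odd number of times. Then the nonzero codewords of $C$ correspond exactly to the closed walks of $G$ in which at least one edge color appears an odd number of times: for every such closed walk $w\in C\setminus\{0\}$, and every nonzero $c\in C$ arises as $w$ for some such closed walk.
   Context: An Adinkra of dimension $N$ is a finite connected simple graph $G=(V,E)$ with: a bipartition of $V$ into bosons and fermions (every edge joins a boson and a fermion); a height function $\mathrm{hgt}:V\to\mathbb{Z}$ with adjacent vertices at heights differing by $1$; a coloring of $E$ by colors $\{1,\dots,N\}$ such that each vertex is incident to exactly one edge of each color; an edge parity $\pi:E\to\mathbb{Z}_2$ (parity $1$ = dashed); such that every path with edge colors $(i,j)$, $i\ne j$, lies in a unique 4-cycle with colors $(i,j,i,j)$, each having an odd number of dashed edges. If $|V|=2^{N-k}$, $G$ is an $(N,k)$ Adinkra. A doubly even $(N,k)$ code is a $k$-dimensional subspace of $\mathbb{Z}_2^N$ all of whose elements have Hamming weight $\equiv0\pmod4$. Labeling the vertices of an $N$-cube Adinkra by $\mathbb{Z}_2^N$ so that color-$i$ edges join $v$ and $v+e_i$, the $(N,k)$ Adinkra $G$ is (up to switching, relabeling vertices and changing heights) obtained by identifying vertices whose labels differ by elements of a doubly even $(N,k)$ code $C$; this $C$ is the associated code of $G$. *)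

theory Defs
  imports Main
begin

text \<open>Vectors of Z_2^N are represented as subsets of the colour set {1..N}
  (a vector is the set of coordinates equal to 1); addition is symmetric
  difference and Hamming weight is cardinality.\<close>

definition vadd :: "nat set \<Rightarrow> nat set \<Rightarrow> nat set" where
  "vadd x y = (x - y) \<union> (y - x)"

definition doubly_even_code :: "nat \<Rightarrow> nat \<Rightarrow> nat set set \<Rightarrow> bool" where
  "doubly_even_code N k C \<longleftrightarrow>
     C \<subseteq> Pow {1..N} \<and> {} \<in> C \<and> (\<forall>x\<in>C. \<forall>y\<in>C. vadd x y \<in> C) \<and>
     card C = 2 ^ k \<and> (\<forall>x\<in>C. card x mod 4 = 0)"

definition is_walk :: "'v set \<Rightarrow> 'v set set \<Rightarrow> 'v list \<Rightarrow> bool" where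
  "is_walk V E vs \<longleftrightarrow> vs \<noteq> [] \<and> set vs \<subseteq> V \<and>
     (\<forall>t. Suc t < length vs \<longrightarrow> {vs ! t, vs ! Suc t} \<in> E)"

definition is_closed_walk :: "'v set \<Rightarrow> 'v set set \<Rightarrow> 'v list \<Rightarrow> bool" where
  "is_closed_walk V E vs \<longleftrightarrow> is_walk V E vs \<and> hd vs = last vs"

definition colour_count :: "('v set \<Rightarrow> nat) \<Rightarrow> 'v list \<Rightarrow> nat \<Rightarrow> nat" where
  "colour_count col vs i = card {t. Suc t < length vs \<and> col {vs ! t, vs ! Suc t} = i}"

definition walk_word :: "nat \<Rightarrow> ('v set \<Rightarrow> nat) \<Rightarrow> 'v list \<Rightarrow> nat set" where
  "walk_word N col vs = {i \<in> {1..N}. odd (colour_count col vs i)}"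

text \<open>Adinkra of dimension N: vertex set V, edges E (2-element subsets of V),
  bipartition bos (True = boson), height hgt, colouring col, parity par (True = dashed).\<close>
definition adinkra ::
  "nat \<Rightarrow> 'v set \<Rightarrow> 'v set set \<Rightarrow> ('v \<Rightarrow> bool) \<Rightarrow> ('v \<Rightarrow> int)
     \<Rightarrow> ('v set \<Rightarrow> nat) \<Rightarrow> ('v set \<Rightarrow> bool) \<Rightarrow> bool" where
  "adinkra N V E bos hgt col par \<longleftrightarrow>
     finite V \<and> V \<noteq> {} \<and>
     E \<subseteq> {{u, v} | u v. u \<in> V \<and> v \<in> V \<and> u \<noteq> v} \<and>
     (\<forall>u\<in>V. \<forall>v\<in>V. \<exists>vs. is_walk V E vs \<and> hd vs = u \<and> last vs = v) \<and>
     (\<forall>u v. {u, v} \<in> E \<longrightarrow> bos u \<noteq> bos v) \<and>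
     (\<forall>u v. {u, v} \<in> E \<longrightarrow> \<bar>hgt u - hgt v\<bar> = 1) \<and>
     (\<forall>e\<in>E. col e \<in> {1..N}) \<and>
     (\<forall>v\<in>V. \<forall>i\<in>{1..N}. \<exists>!e. e \<in> E \<and> v \<in> e \<and> col e = i) \<and>
     (\<forall>u v w i j. {u, v} \<in> E \<and> {v, w} \<in> E \<and> col {u, v} = i \<and> col {v, w} = j \<and> i \<noteq> j \<longrightarrow>
        (\<exists>!x. {w, x} \<in> E \<and> {x, u} \<in> E \<and> col {w, x} = i \<and> col {x, u} = j)) \<and>
     (\<forall>u v w x i j. {u, v} \<in> E \<and> {v, w} \<in> E \<and> {w, x} \<in> E \<and> {x, u} \<in> E \<and>
        col {u, v} = i \<and> col {v, w} = j \<and> col {w, x} = i \<and> col {x, u} = j \<and> i \<noteq> j \<longrightarrow>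
        odd (card (Set.filter par {{u, v}, {v, w}, {w, x}, {x, u}})))"

definition NK_adinkra ::
  "nat \<Rightarrow> nat \<Rightarrow> 'v set \<Rightarrow> 'v set set \<Rightarrow> ('v \<Rightarrow> bool) \<Rightarrow> ('v \<Rightarrow> int)
     \<Rightarrow> ('v set \<Rightarrow> nat) \<Rightarrow> ('v set \<Rightarrow> bool) \<Rightarrow> bool" where
  "NK_adinkra N k V E bos hgt col par \<longleftrightarrow>
     adinkra N V E bos hgt col par \<and> card V = 2 ^ (N - k)"

text \<open>C is the associated code of the (N,k) Adinkra: C is a doubly even (N,k) code and
  (up to switching, relabelling vertices and changing heights, none of which affect
  the coloured graph) G is the quotient of the N-cube by C: there is a surjection
  phi from Z_2^N onto V identifying exactly labels differing by a codeword, such that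
  colour-i edges join phi(v) and phi(v + e_i), and these are all edges.\<close>
definition associated_code ::
  "nat \<Rightarrow> nat \<Rightarrow> 'v set \<Rightarrow> 'v set set \<Rightarrow> ('v set \<Rightarrow> nat) \<Rightarrow> nat set set \<Rightarrow> bool" where
  "associated_code N k V E col C \<longleftrightarrow>
     doubly_even_code N k C \<and>
     (\<exists>\<phi> :: nat set \<Rightarrow> 'v.
        \<phi> ` Pow {1..N} = V \<and>
        (\<forall>x\<in>Pow {1..N}. \<forall>y\<in>Pow {1..N}. \<phi> x = \<phi> y \<longleftrightarrow> vadd x y \<in> C) \<and>
        (\<forall>x\<in>Pow {1..N}. \<forall>i\<in>{1..N}.
            {\<phi> x, \<phi> (vadd x {i})} \<in> E \<and> col {\<phi> x, \<phi> (vadd x {i})} = i) \<and>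
        (\<forall>e\<in>E. \<exists>x\<in>Pow {1..N}. \<exists>i\<in>{1..N}. e = {\<phi> x, \<phi> (vadd x {i})}))"

end

theory Submission
  imports Defs
begin

lemma vadd_comm: "vadd x y = vadd y x" by (auto simp: vadd_def)

fun pref :: "(nat \<Rightarrow> nat) \<Rightarrow> nat \<Rightarrow> nat set" where
  "pref f 0 = {}"
| "pref f (Suc n) = vadd (pref f n) {f n}"

lemma pref_eq: "pref f n = {i. odd (card {t. t < n \<and> f t = i})}"
proof (induction n)
  case 0 then show ?case by simp
next
  case (Suc n)
  have h: "\<And>i. {t. t < Suc n \<and> f t = i} = {t. t < n \<and> f t = i} \<union> (if f n = i then {n} else {})"
    by (auto simp: less_Suc_eq)
  have c: "\<And>i. card {t. t < Suc n \<and> f t = i} = card {t. t < n \<and> f t = i} + (if f n = i then 1 else 0)"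
    unfolding h by (auto simp: card_insert_if)
  show ?case unfolding pref.simps Suc vadd_def using c by auto
qed

lemma pref_sub: "(\<And>t. t < n \<Longrightarrow> f t \<in> S) \<Longrightarrow> pref f n \<subseteq> S"
  by (induction n) (auto simp: vadd_def)

lemma walk_word_pref:
  "walk_word N col vs = {1..N} \<inter> pref (\<lambda>t. col {vs!t, vs!Suc t}) (length vs - 1)"
proof -
  have "\<And>i. {t. Suc t < length vs \<and> col {vs ! t, vs ! Suc t} = i}
        = {t. t < length vs - 1 \<and> col {vs ! t, vs ! Suc t} = i}" by auto
  then show ?thesis unfolding walk_word_def colour_count_def pref_eq by auto
qed

lemma pref_take: "distinct l \<Longrightarrow> j \<le> length l \<Longrightarrow> pref (\<lambda>t. l!t) j = set (take j l)"
proof (induction j)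
  case 0 then show ?case by simp
next
  case (Suc j)
  have jl: "j < length l" using Suc.prems by simp
  have "distinct (take (Suc j) l)" using Suc.prems by simp
  hence "l!j \<notin> set (take j l)" using jl by (simp add: take_Suc_conv_app_nth)
  then show ?case using Suc by (auto simp: vadd_def take_Suc_conv_app_nth)
qed

theorem mainTheorem16:
  fixes N k :: nat and V :: "'v set" and E :: "'v set set" and bos :: "'v \<Rightarrow> bool"
    and hgt :: "'v \<Rightarrow> int" and col :: "'v set \<Rightarrow> nat" and par :: "'v set \<Rightarrow> bool"
    and C :: "nat set set"
  assumes "NK_adinkra N k V E bos hgt col par"
    and "associated_code N k V E col C"
  shows "(\<forall>vs. is_closed_walk V E vs \<and> walk_word N col vs \<noteq> {}
              \<longrightarrow> walk_word N col vs \<in> C - {{}})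
       \<and> (\<forall>c\<in>C - {{}}. \<exists>vs. is_closed_walk V E vs \<and> walk_word N col vs \<noteq> {}
              \<and> walk_word N col vs = c)"
proof -
  have ad: "adinkra N V E bos hgt col par" using assms(1) by (simp add: NK_adinkra_def)
  have Esub: "E \<subseteq> {{u, v} | u v. u \<in> V \<and> v \<in> V \<and> u \<noteq> v}"
    and Ecol: "\<forall>e\<in>E. col e \<in> {1..N}" using ad by (auto simp: adinkra_def)
  have code: "doubly_even_code N k C" using assms(2) by (simp add: associated_code_def)
  hence Csub: "C \<subseteq> Pow {1..N}" and C0: "{} \<in> C" by (auto simp: doubly_even_code_def)
  obtain \<phi> :: "nat set \<Rightarrow> 'v" where
    im: "\<phi> ` Pow {1..N} = V" and
    eq: "\<forall>x\<in>Pow {1..N}. \<forall>y\<in>Pow {1..N}. \<phi> x = \<phi> y \<longleftrightarrow> vadd x y \<in> C" and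
    ed: "\<forall>x\<in>Pow {1..N}. \<forall>i\<in>{1..N}.
            {\<phi> x, \<phi> (vadd x {i})} \<in> E \<and> col {\<phi> x, \<phi> (vadd x {i})} = i" and
    ea: "\<forall>e\<in>E. \<exists>x\<in>Pow {1..N}. \<exists>i\<in>{1..N}. e = {\<phi> x, \<phi> (vadd x {i})}"
    using assms(2) unfolding associated_code_def by blast
  have vP: "\<And>x y. x \<in> Pow {1..N} \<Longrightarrow> y \<in> Pow {1..N} \<Longrightarrow> vadd x y \<in> Pow {1..N}"
    by (auto simp: vadd_def)
  have P1: "walk_word N col vs \<in> C - {{}}" if cw: "is_closed_walk V E vs" and ne: "walk_word N col vs \<noteq> {}" for vs
  proof -
    have w: "is_walk V E vs" and hl: "hd vs = last vs" using cw by (auto simp: is_closed_walk_def)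
    have vsne: "vs \<noteq> []" and setV: "set vs \<subseteq> V"
      and edges: "\<And>t. Suc t < length vs \<Longrightarrow> {vs ! t, vs ! Suc t} \<in> E"
      using w by (auto simp: is_walk_def)
    define cs where "cs = (\<lambda>t. col {vs!t, vs!Suc t})"
    have "vs ! 0 \<in> V" using vsne setV by auto
    then obtain x0 where x0: "x0 \<in> Pow {1..N}" "vs ! 0 = \<phi> x0" using im by auto
    have inv: "vadd x0 (pref cs t) \<in> Pow {1..N} \<and> vs ! t = \<phi> (vadd x0 (pref cs t))"
      if "t < length vs" for t
      using that
    proof (induction t)
      case 0 then show ?case using x0 by (simp add: vadd_def)
    next
      case (Suc t)
      let ?y = "vadd x0 (pref cs t)"
      have IH: "?y \<in> Pow {1..N}" "vs ! t = \<phi> ?y" using Suc by auto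
      have eE: "{vs ! t, vs ! Suc t} \<in> E" using edges Suc.prems by simp
      from bspec[OF ea eE] obtain x i where xi: "x \<in> Pow {1..N}" "i \<in> {1..N}"
        "{vs ! t, vs ! Suc t} = {\<phi> x, \<phi> (vadd x {i})}" by blast
      have csi: "cs t = i" unfolding cs_def using xi ed by simp
      have neq: "vs ! t \<noteq> vs ! Suc t"
      proof
        assume "vs ! t = vs ! Suc t"
        hence "{vs ! t} \<in> E" using eE by simp
        then obtain u v where "{vs ! t} = {u, v}" "u \<noteq> v" using Esub by blast
        then show False by (metis insertCI singletonD)
      qed
      have xiP: "vadd x {i} \<in> Pow {1..N}" using vP xi by auto
      have yiP: "vadd ?y {i} \<in> Pow {1..N}" using vP xi IH by auto
      have new: "vadd x0 (pref cs (Suc t)) = vadd ?y {i}"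
        using csi by (auto simp: vadd_def)
      have "vs ! Suc t = \<phi> (vadd ?y {i})"
      proof (cases "vs ! t = \<phi> x")
        case True
        hence s: "vs ! Suc t = \<phi> (vadd x {i})" using xi neq by (auto simp: doubleton_eq_iff)
        have "vadd ?y x \<in> C" using eq IH True xi by (auto simp: vadd_comm)
        moreover have "vadd (vadd ?y {i}) (vadd x {i}) = vadd ?y x" by (auto simp: vadd_def)
        ultimately have "vadd (vadd ?y {i}) (vadd x {i}) \<in> C" by simp
        then have "\<phi> (vadd ?y {i}) = \<phi> (vadd x {i})" using bspec[OF bspec[OF eq yiP] xiP] by simp
        then show ?thesis using s by simp
      next
        case False
        hence a: "vs ! t = \<phi> (vadd x {i})" and s: "vs ! Suc t = \<phi> x"
          using xi neq by (auto simp: doubleton_eq_iff)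
        have "vadd ?y (vadd x {i}) \<in> C" using eq IH a xiP by (auto simp: vadd_comm)
        moreover have "vadd (vadd ?y {i}) x = vadd ?y (vadd x {i})" by (auto simp: vadd_def)
        ultimately have "vadd (vadd ?y {i}) x \<in> C" by simp
        then have "\<phi> (vadd ?y {i}) = \<phi> x" using bspec[OF bspec[OF eq yiP] xi(1)] by simp
        then show ?thesis using s by simp
      qed
      then show ?case using new yiP by simp
    qed
    let ?m = "length vs - 1"
    have csr: "\<And>t. t < ?m \<Longrightarrow> cs t \<in> {1..N}" unfolding cs_def using edges Ecol by auto
    have PS: "pref cs ?m \<subseteq> {1..N}" by (rule pref_sub) (rule csr)
    have W0: "walk_word N col vs = {1..N} \<inter> pref cs ?m" unfolding cs_def by (rule walk_word_pref)
    have W: "walk_word N col vs = pref cs ?m" using W0 PS by auto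
    have WP: "pref cs ?m \<in> Pow {1..N}" using PS by auto
    have "vs ! ?m = \<phi> (vadd x0 (pref cs ?m))" "vadd x0 (pref cs ?m) \<in> Pow {1..N}"
      using inv[of ?m] vsne by auto
    moreover have "vs ! ?m = vs ! 0" using hl vsne by (simp add: hd_conv_nth last_conv_nth)
    ultimately have "vadd (vadd x0 (pref cs ?m)) x0 \<in> C" using eq x0 by auto
    moreover have "vadd (vadd x0 (pref cs ?m)) x0 = pref cs ?m" by (auto simp: vadd_def)
    ultimately show ?thesis using W ne by auto
  qed
  have P2: "\<exists>vs. is_closed_walk V E vs \<and> walk_word N col vs \<noteq> {} \<and> walk_word N col vs = c"
    if cC: "c \<in> C - {{}}" for c
  proof -
    have cP: "c \<subseteq> {1..N}" using cC Csub by auto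
    have fc: "finite c" using cP finite_subset by blast
    define l where "l = sorted_list_of_set c"
    have dl: "distinct l" and sl: "set l = c" unfolding l_def using fc by auto
    define vs where "vs = map (\<lambda>j. \<phi> (set (take j l))) [0..<Suc (length l)]"
    have len: "length vs = Suc (length l)" by (simp add: vs_def)
    have nth: "\<And>t. t \<le> length l \<Longrightarrow> vs ! t = \<phi> (set (take t l))"
      unfolding vs_def by (simp del: upt_Suc add: nth_map_upt)
    have tP: "set (take t l) \<in> Pow {1..N}" for t using set_take_subset[of t l] sl cP by auto
    have step: "\<And>t. t < length l \<Longrightarrow> set (take (Suc t) l) = vadd (set (take t l)) {l!t}"
      using pref_take[OF dl] by (metis Suc_leI less_imp_le pref.simps(2))
    have edge: "{vs!t, vs!Suc t} \<in> E \<and> col {vs!t, vs!Suc t} = l!t" if "t < length l" for t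
    proof -
      have "l!t \<in> {1..N}" using that sl cP nth_mem by blast
      moreover have "vs!t = \<phi> (set (take t l))" using nth that by simp
      moreover have "vs!Suc t = \<phi> (vadd (set (take t l)) {l!t})" using nth[of "Suc t"] that step[OF that] by simp
      ultimately show ?thesis using bspec[OF ed tP[of t]] by simp
    qed
    have walk: "is_walk V E vs"
      unfolding is_walk_def
    proof (intro conjI allI impI)
      show "vs \<noteq> []" using len by auto
      show "set vs \<subseteq> V" using im tP sl cP by (auto simp: vs_def)
      fix t assume "Suc t < length vs" thus "{vs ! t, vs ! Suc t} \<in> E" using edge len by simp
    qed
    have "hd vs = \<phi> {}" by (simp add: vs_def del: upt_Suc add: upt_conv_Cons)
    moreover have "last vs = \<phi> c"
    proof -
      have "vs \<noteq> []" using len by auto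
      hence "last vs = vs ! length l" using len by (simp add: last_conv_nth)
      thus ?thesis using nth[of "length l"] sl by simp
    qed
    moreover have "\<phi> c = \<phi> {}"
    proof -
      have "vadd c {} = c" by (simp add: vadd_def)
      moreover have "c \<in> Pow {1..N}" "{} \<in> Pow {1..N}" using cP by auto
      ultimately show ?thesis using bspec[OF bspec[OF eq \<open>c \<in> Pow {1..N}\<close>] \<open>{} \<in> Pow {1..N}\<close>] cC by simp
    qed
    ultimately have cw: "is_closed_walk V E vs" using walk by (simp add: is_closed_walk_def)
    have "pref (\<lambda>t. col {vs!t, vs!Suc t}) (length l) = pref (\<lambda>t. l!t) (length l)"
    proof -
      have "\<And>n. n \<le> length l \<Longrightarrow> pref (\<lambda>t. col {vs!t, vs!Suc t}) n = pref (\<lambda>t. l!t) n"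
      proof -
        fix n show "n \<le> length l \<Longrightarrow> pref (\<lambda>t. col {vs!t, vs!Suc t}) n = pref (\<lambda>t. l!t) n"
          by (induction n) (auto simp: edge)
      qed
      then show ?thesis by simp
    qed
    hence "walk_word N col vs = {1..N} \<inter> set l"
      using walk_word_pref[of N col vs] len pref_take[OF dl, of "length l"] by simp
    hence "walk_word N col vs = c" using sl cP by blast
    then show ?thesis using cw cC by auto
  qed
  show ?thesis
  proof (intro conjI allI impI ballI)
    fix vs assume "is_closed_walk V E vs \<and> walk_word N col vs \<noteq> {}"
    thus "walk_word N col vs \<in> C - {{}}" using P1 by simp
  next
    fix c assume "c \<in> C - {{}}"
    thus "\<exists>vs. is_closed_walk V E vs \<and> walk_word N col vs \<noteq> {} \<and> walk_word N col vs = c"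
      by (rule P2)
  qed
qed

end
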